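(* In the setting of the context, let $\omega\in\mathcal{C}$ and put $\kappa:=\frac{\omega^2}{c-id\omega-\omega^2}$, $\lambda:=\omega^2$. Define $\epsilon_0$ as follows. If $\kappa_\Re=0$, $$\epsilon_0:=\sqrt{\min_{\beta\in W(B)}|\beta\kappa_\Im+\lambda_\Im|^2+\min_{\alpha\in W(A)}|\alpha-\lambda_\Re|^2}.$$ If $\kappa_\Re\neq0$, let $\beta_{\inf}$ and $\beta_{\sup}$ be the values in $\overline{W(B)}$ closest to $-\frac{\kappa_\Im\lambda_\Im-\kappa_\Re(\inf W(A)-\lambda_\Re)}{|\kappa|^2}$ and $-\frac{\kappa_\Im\lambda_\Im-\kappa_\Re(\sup W(A)-\lambda_\Re)}{|\kappa|^2}$, respectively, and let $\mathcal{B}:=\left[\frac{\inf W(A)-\lambda_\Re}{\kappa_\Re},\frac{\sup W(A)-\lambda_\Re}{\kappa_\Re}\right]$. If $\mathcal{B}\cap\overline{W(B)}=\emptyset$ set $\Omega':=\{(\inf W(A),\beta_{\inf}),(\sup W(A),\beta_{\sup})\}$; if $\mathcal{B}\cap\overline{W(B)}\neq\emptyset$ set $\Omega':=\{(\inf W(A),\beta_{\inf}),(\sup W(A),\beta_{\sup}),(\alpha_{op},\beta_{op})\}$, where $\beta_{op}$ is the value in $\mathcal{B}\cap\overline{W(B)}$ closest to $-\lambda_\Im/\kappa_\Im$ (arbitrary in $\mathcal{B}\cap\overline{W(B)}$ if $\kappa_\Im=0$) and $\alpha_{op}:=\beta_{op}\kappa_\Re+\lambda_\Re$; then $$\epsilon_0:=\min_{(\alpha,\beta)\in\Omega'}\sqrt{|\beta\kappa_\Im+\lambda_\Im|^2+|\alpha-\kappa_\Re\beta-\lambda_\Re|^2}.$$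 Then $\omega\in W^\epsilon_\Omega(T)$ if and only if $\epsilon>\epsilon_0$.
   Context: Let $\mathcal{H}$ be a Hilbert space, $A$ a selfadjoint (possibly unbounded) operator in $\mathcal{H}$ and $B$ a nonzero bounded selfadjoint operator. Let $c\ge0$, $d>0$, $\delta_\pm:=\pm\sqrt{c-d^2/4}-id/2$ (principal square root), $\mathcal{C}:=\mathbb{C}\setminus\{\delta_+,\delta_-\}$. $W(A),W(B)$ are numerical ranges; for $z\in\mathbb{C}$, $z_\Re,z_\Im$ are real and imaginary parts. For real $\alpha,\beta$ let $t_{(\alpha,\beta)}(\omega):=\alpha-\omega^2-\frac{\omega^2}{c-id\omega-\omega^2}\beta$ and $p_{(\alpha,\beta)}(\omega):=(\alpha-\omega^2)(c-id\omega-\omega^2)-\beta\omega^2$, with roots $r_1,\dots,r_4$ labelled continuously in $(\alpha,\beta)$ and extended by limits to $\overline{\mathbb{R}}\times\mathbb{R}$, values in $\overline{\mathbb{C}}$. $\Omega:=\overline{W(A)}\times\overline{W(B)}$ (closure of $W(A)$ in $\overline{\mathbb{R}}=\mathbb{R}\cup\{\pm\infty\}$), $W_\Omega(T):=\bigcup_n r_n(\Omega)$, and for $\epsilon>0$, $W^\epsilon_\Omega(T):=W_\Omega(T)\cup\{\omega\in\mathcal{C}\setminus W_\Omega(T):\exists(\alpha,\beta)\in\Omega,\ |t_{(\alpha,\beta)}(\omega)|<\epsilon\}$. *)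

theory Defs
  imports "HOL-Analysis.Analysis" "HOL-Library.Extended_Real"
begin

(* The numerical ranges W(A), W(B) are modelled as sets of reals WA, WB. *)

definition delta_p :: "real \<Rightarrow> real \<Rightarrow> complex" where
  "delta_p c d = csqrt (complex_of_real (c - d^2/4)) - \<i> * complex_of_real (d/2)"

definition delta_m :: "real \<Rightarrow> real \<Rightarrow> complex" where
  "delta_m c d = - csqrt (complex_of_real (c - d^2/4)) - \<i> * complex_of_real (d/2)"

definition Cset :: "real \<Rightarrow> real \<Rightarrow> complex set" where
  "Cset c d = UNIV - {delta_p c d, delta_m c d}"

definition tfun :: "real \<Rightarrow> real \<Rightarrow> real \<Rightarrow> real \<Rightarrow> complex \<Rightarrow> complex" where
  "tfun c d \<alpha> \<beta> \<omega> = complex_of_real \<alpha> - \<omega>^2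
     - \<omega>^2 / (complex_of_real c - \<i> * complex_of_real d * \<omega> - \<omega>^2) * complex_of_real \<beta>"

definition pfun :: "real \<Rightarrow> real \<Rightarrow> real \<Rightarrow> real \<Rightarrow> complex \<Rightarrow> complex" where
  "pfun c d \<alpha> \<beta> \<omega> = (complex_of_real \<alpha> - \<omega>^2)
     * (complex_of_real c - \<i> * complex_of_real d * \<omega> - \<omega>^2) - complex_of_real \<beta> * \<omega>^2"

text \<open>Finite (complex) part of W_Omega(T) = union of all roots r_n(Omega), Omega =
  closure of WA in the extended reals times closure of WB.  For finite alpha the
  union over n of r_n(alpha,beta) is the set of roots of p_(alpha,beta); at
  alpha = +-infinity (present iff WA is unbounded above/below) the limit
  roots are delta_+, delta_- and infinity; infinity is not a complex number.\<close>
definition W_Omega :: "real \<Rightarrow> real \<Rightarrow> real set \<Rightarrow> real set \<Rightarrow> complex set" where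
  "W_Omega c d WA WB =
     {\<omega>. \<exists>\<alpha>\<in>closure WA. \<exists>\<beta>\<in>closure WB. pfun c d \<alpha> \<beta> \<omega> = 0}
     \<union> (if bdd_above WA \<and> bdd_below WA then {} else {delta_p c d, delta_m c d})"

definition W_eps :: "real \<Rightarrow> real \<Rightarrow> real set \<Rightarrow> real set \<Rightarrow> real \<Rightarrow> complex set" where
  "W_eps c d WA WB \<epsilon> = W_Omega c d WA WB \<union>
     {\<omega> \<in> Cset c d - W_Omega c d WA WB.
        \<exists>\<alpha>\<in>closure WA. \<exists>\<beta>\<in>closure WB. cmod (tfun c d \<alpha> \<beta> \<omega>) < \<epsilon>}"

definition kap :: "real \<Rightarrow> real \<Rightarrow> complex \<Rightarrow> complex" where
  "kap c d \<omega> = \<omega>^2 / (complex_of_real c - \<i> * complex_of_real d * \<omega> - \<omega>^2)"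

definition nearest :: "real set \<Rightarrow> real \<Rightarrow> real" where
  "nearest S x = (THE y. y \<in> S \<and> (\<forall>z\<in>S. \<bar>y - x\<bar> \<le> \<bar>z - x\<bar>))"

definition nearest_e :: "real set \<Rightarrow> ereal \<Rightarrow> real" where
  "nearest_e S x = (if x = \<infinity> then Sup S else if x = -\<infinity> then Inf S
                    else nearest S (real_of_ereal x))"

definition cost :: "complex \<Rightarrow> complex \<Rightarrow> ereal \<Rightarrow> real \<Rightarrow> ereal" where
  "cost \<kappa> lam a \<beta> = (if a = \<infinity> \<or> a = -\<infinity> then \<infinity>
     else ereal (sqrt ((\<beta> * Im \<kappa> + Im lam)^2 + (real_of_ereal a - Re \<kappa> * \<beta> - Re lam)^2)))"

definition eps0 :: "real \<Rightarrow> real \<Rightarrow> real set \<Rightarrow> real set \<Rightarrow> complex \<Rightarrow> ereal" where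
  "eps0 c d WA WB \<omega> =
    (let \<kappa> = kap c d \<omega>; lam = \<omega>^2;
         a = Inf (ereal ` WA); b = Sup (ereal ` WA); CB = closure WB
     in if Re \<kappa> = 0 then
          ereal (sqrt ((INF \<beta>\<in>WB. \<bar>\<beta> * Im \<kappa> + Im lam\<bar>^2) + (INF \<alpha>\<in>WA. \<bar>\<alpha> - Re lam\<bar>^2)))
        else
          (let tgt = (\<lambda>A. ereal (- (Im \<kappa> * Im lam + Re \<kappa> * Re lam) / (cmod \<kappa>)^2)
                          + ereal (Re \<kappa> / (cmod \<kappa>)^2) * A);
               \<beta>inf = nearest_e CB (tgt a);
               \<beta>sup = nearest_e CB (tgt b);
               e1 = (a - ereal (Re lam)) * ereal (1 / Re \<kappa>);
               e2 = (b - ereal (Re lam)) * ereal (1 / Re \<kappa>);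
               BB = {\<beta>. min e1 e2 \<le> ereal \<beta> \<and> ereal \<beta> \<le> max e1 e2};
               I = BB \<inter> CB;
               \<beta>op = (if Im \<kappa> = 0 then (SOME \<beta>. \<beta> \<in> I) else nearest I (- Im lam / Im \<kappa>));
               \<alpha>op = \<beta>op * Re \<kappa> + Re lam;
               \<Omega>' = (if I = {} then {(a, \<beta>inf), (b, \<beta>sup)}
                      else {(a, \<beta>inf), (b, \<beta>sup), (ereal \<alpha>op, \<beta>op)})
           in Min ((\<lambda>(\<alpha>, \<beta>). cost \<kappa> lam \<alpha> \<beta>) ` \<Omega>')))"

end

theory Submission
  imports Defs
begin

lemma den_nonzero:
  assumes "\<omega> \<in> Cset c d"
  shows "complex_of_real c - \<i> * complex_of_real d * \<omega> - \<omega>^2 \<noteq> 0"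
proof
  assume h: "complex_of_real c - \<i> * complex_of_real d * \<omega> - \<omega>^2 = 0"
  define s where "s = csqrt (complex_of_real (c - d^2/4))"
  have s2: "s^2 = complex_of_real c - complex_of_real d ^2 / 4"
    unfolding s_def power2_csqrt by simp
  have "(\<omega> - delta_p c d) * (\<omega> - delta_m c d) = \<omega>^2 + \<i> * complex_of_real d * \<omega> - complex_of_real c"
    unfolding delta_p_def delta_m_def s_def[symmetric]
    using s2 by (simp add: algebra_simps power2_eq_square)
  also have "\<dots> = 0" using h by (simp add: algebra_simps)
  finally have "\<omega> = delta_p c d \<or> \<omega> = delta_m c d" by simp
  thus False using assms unfolding Cset_def by auto
qed

lemma inf_closure_le:
  fixes f :: "real \<Rightarrow> real"
  assumes "continuous_on UNIV f" "bdd_below (f ` S)" "x \<in> closure S"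
  shows "(INF y\<in>S. f y) \<le> f x"
proof -
  obtain s where s: "\<forall>n. s n \<in> S" "s \<longlonglongrightarrow> x" using assms(3) closure_sequential by blast
  have "isCont f x" using assms(1) by (simp add: continuous_on_eq_continuous_at)
  then have "(\<lambda>n. f (s n)) \<longlonglongrightarrow> f x"
    using isCont_tendsto_compose s(2) by blast
  moreover have "\<forall>n. (INF y\<in>S. f y) \<le> f (s n)" using s(1) assms(2) by (simp add: cINF_lower)
  ultimately show ?thesis by (simp add: LIMSEQ_le_const)
qed

lemma nearest_prop:
  fixes S :: "real set"
  assumes "closed S" "is_interval S" "S \<noteq> {}"
  shows "nearest S x \<in> S \<and> (\<forall>z\<in>S. \<bar>nearest S x - x\<bar> \<le> \<bar>z - x\<bar>)"
proof -
  obtain y where y: "y \<in> S" "\<And>z. z \<in> S \<Longrightarrow> dist x y \<le> dist x z"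
    using distance_attains_inf[OF assms(1,3)] by blast
  have P: "y \<in> S \<and> (\<forall>z\<in>S. \<bar>y - x\<bar> \<le> \<bar>z - x\<bar>)" using y by (simp add: dist_real_def abs_minus_commute)
  have U: "y' = y" if "y' \<in> S \<and> (\<forall>z\<in>S. \<bar>y' - x\<bar> \<le> \<bar>z - x\<bar>)" for y'
  proof (rule ccontr)
    assume ne: "y' \<noteq> y"
    have eq: "\<bar>y' - x\<bar> = \<bar>y - x\<bar>" using that P by force
    have "x \<in> S"
      using assms(2) that P ne eq unfolding is_interval_1
      by (smt (verit))
    then show False using that P ne eq by force
  qed
  have "nearest S x = y" unfolding nearest_def using P U by (rule the_equality) auto
  thus ?thesis using P by simp
qed

lemma closed_ge_ereal: "closed {x::real. lo \<le> ereal x}"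
proof (cases lo)
  case (real r) then have "{x::real. lo \<le> ereal x} = {r..}" by auto
  then show ?thesis by simp
next
  case PInf then have "{x::real. lo \<le> ereal x} = {}" by auto
  then show ?thesis by simp
next
  case MInf then have "{x::real. lo \<le> ereal x} = UNIV" by auto
  then show ?thesis by simp
qed

lemma closed_le_ereal: "closed {x::real. ereal x \<le> hi}"
proof (cases hi)
  case (real r) then have "{x::real. ereal x \<le> hi} = {..r}" by auto
  then show ?thesis by simp
next
  case PInf then have "{x::real. ereal x \<le> hi} = UNIV" by auto
  then show ?thesis by simp
next
  case MInf then have "{x::real. ereal x \<le> hi} = {}" by auto
  then show ?thesis by simp
qed

lemma closure_WA:
  fixes WA :: "real set"
  assumes "WA \<noteq> {}" "is_interval WA"
  shows "x \<in> closure WA \<longleftrightarrow> Inf (ereal ` WA) \<le> ereal x \<and> ereal x \<le> Sup (ereal ` WA)"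
proof
  assume "x \<in> closure WA"
  moreover have "closure WA \<subseteq> {x. Inf (ereal ` WA) \<le> ereal x} \<inter> {x. ereal x \<le> Sup (ereal ` WA)}"
    by (rule closure_minimal) (auto intro: INF_lower SUP_upper closed_Int closed_ge_ereal closed_le_ereal)
  ultimately show "Inf (ereal ` WA) \<le> ereal x \<and> ereal x \<le> Sup (ereal ` WA)" by blast
next
  assume h: "Inf (ereal ` WA) \<le> ereal x \<and> ereal x \<le> Sup (ereal ` WA)"
  show "x \<in> closure WA"
    unfolding closure_approachable
  proof (intro allI impI)
    fix e :: real assume e: "e > 0"
    have "Inf (ereal ` WA) < ereal (x + e)" 
    proof -
      have "ereal x < ereal (x + e)" using e by simp
      then show ?thesis using h order_le_less_trans by blast
    qed
    then obtain w1 where w1: "w1 \<in> WA" "w1 < x + e" by (auto simp: Inf_less_iff)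
    have "ereal (x - e) < Sup (ereal ` WA)" 
    proof -
      have "ereal (x - e) < ereal x" using e by simp
      then show ?thesis using h order_less_le_trans by blast
    qed
    then obtain w2 where w2: "w2 \<in> WA" "x - e < w2" by (auto simp: less_Sup_iff)
    show "\<exists>y\<in>WA. dist y x < e"
    proof (cases "x - e < w1")
      case True then show ?thesis using w1 by (intro bexI[of _ w1]) (auto simp: dist_real_def)
    next
      case f1: False
      show ?thesis
      proof (cases "w2 < x + e")
        case True then show ?thesis using w2 by (intro bexI[of _ w2]) (auto simp: dist_real_def)
      next
        case False
        then have "x \<in> WA" using f1 w1 w2 e assms(2) unfolding is_interval_1 by (smt (verit))
        then show ?thesis using e by (intro bexI[of _ x]) auto
      qed
    qed
  qed
qed

lemma BB_iff:
  fixes a b :: ereal and r l x :: real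
  assumes "r \<noteq> 0" "a \<le> b"
  defines "e1 \<equiv> (a - ereal l) * ereal (1 / r)" and "e2 \<equiv> (b - ereal l) * ereal (1 / r)"
  shows "(min e1 e2 \<le> ereal x \<and> ereal x \<le> max e1 e2) \<longleftrightarrow> (a \<le> ereal (r * x + l) \<and> ereal (r * x + l) \<le> b)"
proof (cases "r > 0")
  case True
  have m1: "e1 \<le> ereal x \<longleftrightarrow> a \<le> ereal (r * x + l)"
    unfolding e1_def using True by (cases a) (auto simp: field_simps)
  have m2: "ereal x \<le> e2 \<longleftrightarrow> ereal (r * x + l) \<le> b"
    unfolding e2_def using True by (cases b) (auto simp: field_simps)
  have "e1 \<le> e2" unfolding e1_def e2_def using True assms(2)
    by (cases a; cases b) (auto simp: field_simps)
  then show ?thesis using m1 m2 by (simp add: min_def max_def)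
next
  case False
  then have r: "r < 0" using assms(1) by simp
  have m1: "ereal x \<le> e1 \<longleftrightarrow> a \<le> ereal (r * x + l)"
    unfolding e1_def using r by (cases a) (auto simp: field_simps)
  have m2: "e2 \<le> ereal x \<longleftrightarrow> ereal (r * x + l) \<le> b"
    unfolding e2_def using r by (cases b) (auto simp: field_simps)
  have "e2 \<le> e1" unfolding e1_def e2_def using r assms(2)
    by (cases a; cases b) (auto simp: field_simps)
  then show ?thesis using m1 m2 by (auto simp: min_def max_def)
qed

definition GG :: "complex \<Rightarrow> complex \<Rightarrow> real \<Rightarrow> real \<Rightarrow> real" where
  "GG \<kappa> lam \<alpha> \<beta> = (\<beta> * Im \<kappa> + Im lam)^2 + (\<alpha> - Re \<kappa> * \<beta> - Re lam)^2"

lemma cmod_tfun: "cmod (tfun c d \<alpha> \<beta> \<omega>) = sqrt (GG (kap c d \<omega>) (\<omega>^2) \<alpha> \<beta>)"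
proof -
  have "tfun c d \<alpha> \<beta> \<omega> = complex_of_real \<alpha> - \<omega>^2 - kap c d \<omega> * complex_of_real \<beta>"
    unfolding tfun_def kap_def by simp
  moreover have "cmod (complex_of_real \<alpha> - L - K * complex_of_real \<beta>) = sqrt (GG K L \<alpha> \<beta>)" for K L
    unfolding GG_def cmod_def by (simp add: power2_eq_square algebra_simps)
  ultimately show ?thesis by simp
qed

lemma pfun_tfun:
  assumes "\<omega> \<in> Cset c d"
  shows "pfun c d \<alpha> \<beta> \<omega> = tfun c d \<alpha> \<beta> \<omega> * (complex_of_real c - \<i> * complex_of_real d * \<omega> - \<omega>^2)"
  using den_nonzero[OF assms] unfolding pfun_def tfun_def by (simp add: field_simps)

lemma W_eps_iff:
  assumes "\<omega> \<in> Cset c d" "\<epsilon> > 0"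
  shows "\<omega> \<in> W_eps c d WA WB \<epsilon> \<longleftrightarrow>
    (\<exists>\<alpha>\<in>closure WA. \<exists>\<beta>\<in>closure WB. sqrt (GG (kap c d \<omega>) (\<omega>^2) \<alpha> \<beta>) < \<epsilon>)"
proof
  assume "\<omega> \<in> W_eps c d WA WB \<epsilon>"
  then consider "\<omega> \<in> W_Omega c d WA WB" | "\<exists>\<alpha>\<in>closure WA. \<exists>\<beta>\<in>closure WB. cmod (tfun c d \<alpha> \<beta> \<omega>) < \<epsilon>"
    unfolding W_eps_def by blast
  then show "\<exists>\<alpha>\<in>closure WA. \<exists>\<beta>\<in>closure WB. sqrt (GG (kap c d \<omega>) (\<omega>^2) \<alpha> \<beta>) < \<epsilon>"
  proof cases
    case 1
    have "\<omega> \<notin> {delta_p c d, delta_m c d}" using assms(1) unfolding Cset_def by blast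
    then obtain \<alpha> \<beta> where ab: "\<alpha> \<in> closure WA" "\<beta> \<in> closure WB" "pfun c d \<alpha> \<beta> \<omega> = 0"
      using 1 unfolding W_Omega_def by (auto split: if_splits)
    then have "tfun c d \<alpha> \<beta> \<omega> = 0" using pfun_tfun[OF assms(1)] den_nonzero[OF assms(1)] by simp
    then have "sqrt (GG (kap c d \<omega>) (\<omega>^2) \<alpha> \<beta>) = 0" using cmod_tfun[of c d \<alpha> \<beta> \<omega>] by simp
    then show ?thesis using ab assms(2) by (metis)
  next
    case 2 then show ?thesis using cmod_tfun by metis
  qed
next
  assume "\<exists>\<alpha>\<in>closure WA. \<exists>\<beta>\<in>closure WB. sqrt (GG (kap c d \<omega>) (\<omega>^2) \<alpha> \<beta>) < \<epsilon>"
  then show "\<omega> \<in> W_eps c d WA WB \<epsilon>"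
    using assms(1) unfolding W_eps_def by (auto simp: cmod_tfun)
qed

lemma case_zero:
  fixes WA WB :: "real set"
  assumes "WA \<noteq> {}" "WB \<noteq> {}" "\<epsilon> > 0" "Re (kap c d \<omega>) = 0"
  shows "(\<exists>\<alpha>\<in>closure WA. \<exists>\<beta>\<in>closure WB. sqrt (GG (kap c d \<omega>) (\<omega>^2) \<alpha> \<beta>) < \<epsilon>)
     \<longleftrightarrow> ereal \<epsilon> > eps0 c d WA WB \<omega>"
proof -
  define \<kappa> where "\<kappa> = kap c d \<omega>"
  define lam where "lam = \<omega>^2"
  define f1 where "f1 = (\<lambda>\<beta>::real. (\<beta> * Im \<kappa> + Im lam)^2)"
  define f2 where "f2 = (\<lambda>\<alpha>::real. (\<alpha> - Re lam)^2)"
  define H1 where "H1 = (INF \<beta>\<in>WB. f1 \<beta>)"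
  define H2 where "H2 = (INF \<alpha>\<in>WA. f2 \<alpha>)"
  have e0: "eps0 c d WA WB \<omega> = ereal (sqrt (H1 + H2))"
    using assms(4) unfolding eps0_def H1_def H2_def f1_def f2_def \<kappa>_def lam_def Let_def
    by (simp add: power2_abs)
  have G: "GG \<kappa> lam \<alpha> \<beta> = f1 \<beta> + f2 \<alpha>" for \<alpha> \<beta>
    using assms(4) unfolding GG_def f1_def f2_def \<kappa>_def by simp
  have b1: "bdd_below (f1 ` S)" for S unfolding f1_def by (rule bdd_belowI[of _ 0]) auto
  have b2: "bdd_below (f2 ` S)" for S unfolding f2_def by (rule bdd_belowI[of _ 0]) auto
  have c1: "continuous_on UNIV f1" unfolding f1_def by (intro continuous_intros)
  have c2: "continuous_on UNIV f2" unfolding f2_def by (intro continuous_intros)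
  have H1nn: "H1 \<ge> 0" unfolding H1_def f1_def using assms(2) by (intro cINF_greatest) auto
  have H2nn: "H2 \<ge> 0" unfolding H2_def f2_def using assms(1) by (intro cINF_greatest) auto
  show ?thesis
    unfolding e0 \<kappa>_def[symmetric] lam_def[symmetric]
  proof
    assume "\<exists>\<alpha>\<in>closure WA. \<exists>\<beta>\<in>closure WB. sqrt (GG \<kappa> lam \<alpha> \<beta>) < \<epsilon>"
    then obtain \<alpha> \<beta> where ab: "\<alpha> \<in> closure WA" "\<beta> \<in> closure WB" "sqrt (GG \<kappa> lam \<alpha> \<beta>) < \<epsilon>" by blast
    have "H1 \<le> f1 \<beta>" unfolding H1_def by (rule inf_closure_le[OF c1 b1 ab(2)])
    moreover have "H2 \<le> f2 \<alpha>" unfolding H2_def by (rule inf_closure_le[OF c2 b2 ab(1)])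
    ultimately have "sqrt (H1 + H2) \<le> sqrt (GG \<kappa> lam \<alpha> \<beta>)" unfolding G by (simp del: real_sqrt_le_iff add: real_sqrt_le_mono)
    then have "sqrt (H1 + H2) < \<epsilon>" using ab(3) by linarith
    then show "ereal (sqrt (H1 + H2)) < ereal \<epsilon>" by simp
  next
    assume "ereal (sqrt (H1 + H2)) < ereal \<epsilon>"
    then have "sqrt (H1 + H2) < \<epsilon>" by simp
    then have lt: "H1 + H2 < \<epsilon>^2" using H1nn H2nn assms(3)
      by (metis add_nonneg_nonneg real_sqrt_less_iff real_sqrt_unique less_eq_real_def)
    define \<delta> where "\<delta> = (\<epsilon>^2 - H1 - H2) / 2"
    have dpos: "\<delta> > 0" using lt unfolding \<delta>_def by simp
    have "H1 < H1 + \<delta>" using dpos by simp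
    then obtain \<beta> where \<beta>: "\<beta> \<in> WB" "f1 \<beta> < H1 + \<delta>" unfolding H1_def
      using cINF_less_iff[OF assms(2) b1] by blast
    have "H2 < H2 + \<delta>" using dpos by simp
    then obtain \<alpha> where \<alpha>: "\<alpha> \<in> WA" "f2 \<alpha> < H2 + \<delta>" unfolding H2_def
      using cINF_less_iff[OF assms(1) b2] by blast
    have "GG \<kappa> lam \<alpha> \<beta> < \<epsilon>^2" unfolding G using \<alpha>(2) \<beta>(2) unfolding \<delta>_def by (simp add: field_simps)
    then have "sqrt (GG \<kappa> lam \<alpha> \<beta>) < \<epsilon>" using assms(3) by (simp add: real_less_lsqrt)
    then show "\<exists>\<alpha>\<in>closure WA. \<exists>\<beta>\<in>closure WB. sqrt (GG \<kappa> lam \<alpha> \<beta>) < \<epsilon>"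
      using \<alpha>(1) \<beta>(1) closure_subset by blast
  qed
qed

lemma quad_mono:
  assumes "Re \<kappa> \<noteq> 0"
    and "\<bar>\<beta>' - (Re \<kappa> * (x - Re lam) - Im \<kappa> * Im lam) / (Re \<kappa>^2 + Im \<kappa>^2)\<bar>
       \<le> \<bar>\<beta> - (Re \<kappa> * (x - Re lam) - Im \<kappa> * Im lam) / (Re \<kappa>^2 + Im \<kappa>^2)\<bar>"
  shows "GG \<kappa> lam x \<beta>' \<le> GG \<kappa> lam x \<beta>"
proof -
  define K where "K = Re \<kappa>^2 + Im \<kappa>^2"
  have K: "K > 0" unfolding K_def using assms(1) by (simp add: add_pos_nonneg)
  define t where "t = (Re \<kappa> * (x - Re lam) - Im \<kappa> * Im lam) / K"
  define C where "C = Im lam^2 + (x - Re lam)^2 - (Re \<kappa> * (x - Re lam) - Im \<kappa> * Im lam)^2 / K"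
  have eq: "GG \<kappa> lam x y = K * (y - t)^2 + C" for y
    unfolding GG_def t_def C_def using K
    apply (simp add: power2_eq_square field_simps)
    apply (simp add: K_def power2_eq_square algebra_simps)
    done
  have "(\<beta>' - t)^2 \<le> (\<beta> - t)^2" using assms(2) unfolding t_def K_def
    by (simp add: abs_le_square_iff)
  then show ?thesis unfolding eq using K by (simp add: mult_left_mono)
qed

lemma alpha_mono:
  assumes "(a - (Re \<kappa> * \<beta> + Re lam)) * (x - a) \<ge> 0"
  shows "GG \<kappa> lam a \<beta> \<le> GG \<kappa> lam x \<beta>"
proof -
  define p where "p = Re \<kappa> * \<beta> + Re lam"
  have e: "(x - p)^2 - (a - p)^2 = (x-a)^2 + 2*((a - p)*(x-a))" by (simp add: power2_eq_square algebra_simps)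
  have "(a - p)^2 \<le> (x - p)^2" using assms e unfolding p_def[symmetric]
    by (smt (verit) zero_le_power2)
  then have "(a - Re \<kappa> * \<beta> - Re lam)^2 \<le> (x - Re \<kappa> * \<beta> - Re lam)^2"
    unfolding p_def by (simp add: algebra_simps)
  then show ?thesis unfolding GG_def by simp
qed

lemma GG_op: "GG \<kappa> lam (\<beta> * Re \<kappa> + Re lam) \<beta> = (\<beta> * Im \<kappa> + Im lam)^2"
  unfolding GG_def by (simp add: algebra_simps)

lemma GG_ge: "(\<beta> * Im \<kappa> + Im lam)^2 \<le> GG \<kappa> lam x \<beta>"
  unfolding GG_def by simp

lemma nearest_e_in:
  fixes S :: "real set"
  assumes "closed S" "is_interval S" "S \<noteq> {}" "bounded S"
  shows "nearest_e S x \<in> S"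
proof -
  have "Sup S \<in> S" using assms by (intro closed_contains_Sup) (auto intro: bounded_imp_bdd_above)
  moreover have "Inf S \<in> S" using assms by (intro closed_contains_Inf) (auto intro: bounded_imp_bdd_below)
  ultimately show ?thesis unfolding nearest_e_def using nearest_prop[OF assms(1-3)] by auto
qed

lemma closed_BB: "closed {\<beta>::real. lo \<le> ereal \<beta> \<and> ereal \<beta> \<le> hi}"
proof -
  have "{\<beta>::real. lo \<le> ereal \<beta> \<and> ereal \<beta> \<le> hi} = {\<beta>. lo \<le> ereal \<beta>} \<inter> {\<beta>. ereal \<beta> \<le> hi}" by auto
  then show ?thesis using closed_ge_ereal closed_le_ereal by (metis closed_Int)
qed

lemma interval_BB: "is_interval {\<beta>::real. lo \<le> ereal \<beta> \<and> ereal \<beta> \<le> hi}"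
  unfolding is_interval_1
proof (clarsimp)
  fix a b x :: real
  assume h: "lo \<le> ereal a" "ereal b \<le> hi" "a \<le> x" "x \<le> b"
  then have "ereal a \<le> ereal x" "ereal x \<le> ereal b" by auto
  then show "lo \<le> ereal x \<and> ereal x \<le> hi" using h(1,2) order_trans by blast
qed

lemma case_nonzero:
  fixes WA WB :: "real set"
  assumes WA: "WA \<noteq> {}" "is_interval WA"
    and WB: "WB \<noteq> {}" "bounded WB" "is_interval WB"
    and eps: "\<epsilon> > 0" and nz: "Re (kap c d \<omega>) \<noteq> 0"
  shows "(\<exists>\<alpha>\<in>closure WA. \<exists>\<beta>\<in>closure WB. sqrt (GG (kap c d \<omega>) (\<omega>^2) \<alpha> \<beta>) < \<epsilon>)
     \<longleftrightarrow> ereal \<epsilon> > eps0 c d WA WB \<omega>"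
proof -
  define \<kappa> where "\<kappa> = kap c d \<omega>"
  define lam where "lam = \<omega>^2"
  define a where "a = Inf (ereal ` WA)"
  define b where "b = Sup (ereal ` WA)"
  define CB where "CB = closure WB"
  define tgt where "tgt = (\<lambda>A. ereal (- (Im \<kappa> * Im lam + Re \<kappa> * Re lam) / (cmod \<kappa>)^2)
                          + ereal (Re \<kappa> / (cmod \<kappa>)^2) * A)"
  define \<beta>inf where "\<beta>inf = nearest_e CB (tgt a)"
  define \<beta>sup where "\<beta>sup = nearest_e CB (tgt b)"
  define e1 where "e1 = (a - ereal (Re lam)) * ereal (1 / Re \<kappa>)"
  define e2 where "e2 = (b - ereal (Re lam)) * ereal (1 / Re \<kappa>)"
  define BB where "BB = {\<beta>. min e1 e2 \<le> ereal \<beta> \<and> ereal \<beta> \<le> max e1 e2}"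
  define I where "I = BB \<inter> CB"
  define \<beta>op where "\<beta>op = (if Im \<kappa> = 0 then (SOME \<beta>. \<beta> \<in> I) else nearest I (- Im lam / Im \<kappa>))"
  define \<alpha>op where "\<alpha>op = \<beta>op * Re \<kappa> + Re lam"
  define \<Omega>' where "\<Omega>' = (if I = {} then {(a, \<beta>inf), (b, \<beta>sup)}
                      else {(a, \<beta>inf), (b, \<beta>sup), (ereal \<alpha>op, \<beta>op)})"
  define cst where "cst = (\<lambda>(\<alpha>, \<beta>). cost \<kappa> lam \<alpha> \<beta>)"
  have e0: "eps0 c d WA WB \<omega> = Min (cst ` \<Omega>')"
    using nz unfolding eps0_def Let_def \<kappa>_def[symmetric] lam_def[symmetric] cst_def \<Omega>'_def \<alpha>op_def
      \<beta>op_def I_def BB_def e1_def e2_def \<beta>inf_def \<beta>sup_def tgt_def CB_def a_def b_def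
    by simp
  have fin: "finite \<Omega>'" "\<Omega>' \<noteq> {}" unfolding \<Omega>'_def by auto
  have ab: "a \<le> b" unfolding a_def b_def using WA(1) by (simp add: Inf_le_Sup)
  have clWA: "x \<in> closure WA \<longleftrightarrow> a \<le> ereal x \<and> ereal x \<le> b" for x
    unfolding a_def b_def using closure_WA[OF WA] .
  have CBp: "closed CB" "is_interval CB" "CB \<noteq> {}" "bounded CB"
    unfolding CB_def using WB
    by (auto simp: is_interval_convex_1 convex_closure bounded_closure)
  have cost_r: "cost \<kappa> lam (ereal x) y = ereal (sqrt (GG \<kappa> lam x y))" for x y
    unfolding cost_def GG_def by simp
  have Ip: "closed I" "is_interval I"
    unfolding I_def BB_def using CBp closed_BB interval_BB by (auto intro: closed_Int is_interval_Int)
  have BBiff: "\<beta> \<in> BB \<longleftrightarrow> a \<le> ereal (Re \<kappa> * \<beta> + Re lam) \<and> ereal (Re \<kappa> * \<beta> + Re lam) \<le> b" for \<beta>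
    unfolding BB_def e1_def e2_def using BB_iff[OF nz[folded \<kappa>_def] ab] by simp
  have opI: "I \<noteq> {} \<Longrightarrow> \<beta>op \<in> I"
    unfolding \<beta>op_def using nearest_prop[OF Ip] by (auto intro: someI_ex)
  have F: "\<exists>\<alpha>\<in>closure WA. \<exists>\<beta>\<in>CB. sqrt (GG \<kappa> lam \<alpha> \<beta>) < \<epsilon>"
    if p: "p \<in> \<Omega>'" "cst p < ereal \<epsilon>" for p
  proof -
    have endpt: "\<exists>\<alpha>\<in>closure WA. \<exists>\<beta>\<in>CB. sqrt (GG \<kappa> lam \<alpha> \<beta>) < \<epsilon>"
      if "e = a \<or> e = b" "cost \<kappa> lam e y < ereal \<epsilon>" "y \<in> CB" for e y
    proof -
      have "e \<noteq> \<infinity> \<and> e \<noteq> -\<infinity>" using that(2) unfolding cost_def by auto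
      then obtain r where r: "e = ereal r" by (cases e) auto
      have "r \<in> closure WA" using clWA that(1) ab r by auto
      then show ?thesis using that(2,3) r cost_r by auto
    qed
    consider "p = (a, \<beta>inf)" | "p = (b, \<beta>sup)" | "I \<noteq> {}" "p = (ereal \<alpha>op, \<beta>op)"
      using p(1) unfolding \<Omega>'_def by (auto split: if_splits)
    then show ?thesis
    proof cases
      case 1 then show ?thesis using endpt[of a \<beta>inf] p(2) nearest_e_in[OF CBp] unfolding cst_def \<beta>inf_def by auto
    next
      case 2 then show ?thesis using endpt[of b \<beta>sup] p(2) nearest_e_in[OF CBp] unfolding cst_def \<beta>sup_def by auto
    next
      case 3
      have "\<beta>op \<in> BB" "\<beta>op \<in> CB" using opI[OF 3(1)] unfolding I_def by auto
      then have "\<alpha>op \<in> closure WA" using BBiff clWA unfolding \<alpha>op_def by (simp add: mult.commute)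
      then show ?thesis using \<open>\<beta>op \<in> CB\<close> p(2) 3(2) cost_r unfolding cst_def by auto
    qed
  qed
  have K: "(cmod \<kappa>)^2 = Re \<kappa>^2 + Im \<kappa>^2" by (simp add: cmod_power2)
  have tgt_r: "tgt (ereal r) = ereal ((Re \<kappa> * (r - Re lam) - Im \<kappa> * Im lam) / (Re \<kappa>^2 + Im \<kappa>^2))" for r
    unfolding tgt_def K
    apply (simp add: field_simps)
    apply (simp only: add_divide_distrib[symmetric])
    apply (simp add: algebra_simps)
    done
  have endL: "\<exists>p\<in>\<Omega>'. cst p \<le> ereal (sqrt (GG \<kappa> lam \<alpha> \<beta>))"
    if "e = a \<or> e = b" "(e, nearest_e CB (tgt e)) \<in> \<Omega>'" "e = ereal r" "\<beta> \<in> CB"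
       "GG \<kappa> lam r \<beta> \<le> GG \<kappa> lam \<alpha> \<beta>" for e r \<alpha> \<beta>
  proof -
    define t where "t = (Re \<kappa> * (r - Re lam) - Im \<kappa> * Im lam) / (Re \<kappa>^2 + Im \<kappa>^2)"
    have n: "nearest_e CB (tgt (ereal r)) = nearest CB t" unfolding tgt_r nearest_e_def t_def by simp
    have "GG \<kappa> lam r (nearest CB t) \<le> GG \<kappa> lam r \<beta>"
      using nz[folded \<kappa>_def] nearest_prop[OF CBp(1-3), of t] that(4) unfolding t_def
      by (intro quad_mono) auto
    then have "cst (e, nearest_e CB (tgt e)) \<le> ereal (sqrt (GG \<kappa> lam \<alpha> \<beta>))"
      unfolding cst_def that(3) n using that(5) by (simp add: cost_r)
    then show ?thesis using that(2) by blast
  qed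
  have L: "\<exists>p\<in>\<Omega>'. cst p \<le> ereal (sqrt (GG \<kappa> lam \<alpha> \<beta>))" if "\<alpha> \<in> closure WA" "\<beta> \<in> CB" for \<alpha> \<beta>
  proof -
    define \<alpha>' where "\<alpha>' = Re \<kappa> * \<beta> + Re lam"
    have al: "a \<le> ereal \<alpha>" "ereal \<alpha> \<le> b" using clWA that(1) by auto
    consider "a \<le> ereal \<alpha>' \<and> ereal \<alpha>' \<le> b" | "ereal \<alpha>' < a" | "b < ereal \<alpha>'" by force
    then show ?thesis
    proof cases
      case 1
      then have "\<beta> \<in> I" unfolding I_def using BBiff that(2) \<alpha>'_def by auto
      then have In: "I \<noteq> {}" by auto
      have mem: "(ereal \<alpha>op, \<beta>op) \<in> \<Omega>'" unfolding \<Omega>'_def using In by simp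
      have "(\<beta>op * Im \<kappa> + Im lam)^2 \<le> (\<beta> * Im \<kappa> + Im lam)^2"
      proof (cases "Im \<kappa> = 0")
        case True then show ?thesis by simp
      next
        case False
        have "\<bar>\<beta>op - (- Im lam / Im \<kappa>)\<bar> \<le> \<bar>\<beta> - (- Im lam / Im \<kappa>)\<bar>"
          using nearest_prop[OF Ip In, of "- Im lam / Im \<kappa>"] \<open>\<beta> \<in> I\<close> False unfolding \<beta>op_def by auto
        then have "(\<beta>op - (- Im lam / Im \<kappa>))^2 \<le> (\<beta> - (- Im lam / Im \<kappa>))^2"
          by (simp add: abs_le_square_iff)
        then have "Im \<kappa>^2 * (\<beta>op - (- Im lam / Im \<kappa>))^2 \<le> Im \<kappa>^2 * (\<beta> - (- Im lam / Im \<kappa>))^2"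
          by (simp add: mult_left_mono)
        moreover have "Im \<kappa>^2 * (y - (- Im lam / Im \<kappa>))^2 = (y * Im \<kappa> + Im lam)^2" for y
          using False by (simp add: power2_eq_square field_simps)
        ultimately show ?thesis by simp
      qed
      then have "GG \<kappa> lam \<alpha>op \<beta>op \<le> GG \<kappa> lam \<alpha> \<beta>"
        unfolding \<alpha>op_def GG_op using GG_ge[of \<beta> \<kappa> lam \<alpha>] by linarith
      then have "cst (ereal \<alpha>op, \<beta>op) \<le> ereal (sqrt (GG \<kappa> lam \<alpha> \<beta>))"
        unfolding cst_def apply simp apply (subst cost_r) by simp
      then show ?thesis using mem by blast
    next
      case 2
      then obtain r where r: "a = ereal r" using al by (cases a) auto
      have "\<alpha>' < r" "r \<le> \<alpha>" using 2 al r by auto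
      then have "GG \<kappa> lam r \<beta> \<le> GG \<kappa> lam \<alpha> \<beta>"
        by (intro alpha_mono) (simp add: \<alpha>'_def[symmetric])
      moreover have "(a, nearest_e CB (tgt a)) \<in> \<Omega>'" unfolding \<Omega>'_def \<beta>inf_def by simp
      ultimately show ?thesis using endL[of a r \<beta> \<alpha>] r that(2) by blast
    next
      case 3
      then obtain r where r: "b = ereal r" using al by (cases b) auto
      have "r < \<alpha>'" "\<alpha> \<le> r" using 3 al r by auto
      then have "GG \<kappa> lam r \<beta> \<le> GG \<kappa> lam \<alpha> \<beta>"
        by (intro alpha_mono) (simp add: \<alpha>'_def[symmetric] mult_nonpos_nonpos)
      moreover have "(b, nearest_e CB (tgt b)) \<in> \<Omega>'" unfolding \<Omega>'_def \<beta>sup_def by simp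
      ultimately show ?thesis using endL[of b r \<beta> \<alpha>] r that(2) by blast
    qed
  qed
  show ?thesis
    unfolding e0 \<kappa>_def[symmetric] lam_def[symmetric] CB_def[symmetric]
  proof
    assume "\<exists>\<alpha>\<in>closure WA. \<exists>\<beta>\<in>CB. sqrt (GG \<kappa> lam \<alpha> \<beta>) < \<epsilon>"
    then obtain \<alpha> \<beta> where h: "\<alpha> \<in> closure WA" "\<beta> \<in> CB" "sqrt (GG \<kappa> lam \<alpha> \<beta>) < \<epsilon>" by blast
    obtain p where "p \<in> \<Omega>'" "cst p \<le> ereal (sqrt (GG \<kappa> lam \<alpha> \<beta>))" using L[OF h(1,2)] by blast
    then have "Min (cst ` \<Omega>') \<le> ereal (sqrt (GG \<kappa> lam \<alpha> \<beta>))"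
      using fin by (meson Min_le finite_imageI image_eqI order_trans)
    then show "Min (cst ` \<Omega>') < ereal \<epsilon>" using h(3) by (meson ereal_less(2) order_le_less_trans ereal_less_eq(3) less_ereal.simps(1))
  next
    assume "Min (cst ` \<Omega>') < ereal \<epsilon>"
    moreover have "Min (cst ` \<Omega>') \<in> cst ` \<Omega>'" using fin by (intro Min_in) auto
    ultimately obtain p where "p \<in> \<Omega>'" "cst p < ereal \<epsilon>" by auto
    then show "\<exists>\<alpha>\<in>closure WA. \<exists>\<beta>\<in>CB. sqrt (GG \<kappa> lam \<alpha> \<beta>) < \<epsilon>" using F by blast
  qed
qed

theorem proposition4p5:
  fixes c d \<epsilon> :: real and WA WB :: "real set" and \<omega> :: complex
  assumes "c \<ge> 0" and "d > 0" and "\<epsilon> > 0"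
    and "WA \<noteq> {}" and "is_interval WA"
    and "WB \<noteq> {}" and "bounded WB" and "is_interval WB" and "WB \<noteq> {0}"
    and "\<omega> \<in> Cset c d"
  shows "\<omega> \<in> W_eps c d WA WB \<epsilon> \<longleftrightarrow> ereal \<epsilon> > eps0 c d WA WB \<omega>"
proof (cases "Re (kap c d \<omega>) = 0")
  case True
  then show ?thesis using W_eps_iff[OF assms(10,3)] case_zero[OF assms(4,6,3) True] by simp
next
  case False
  then show ?thesis using W_eps_iff[OF assms(10,3)] case_nonzero[OF assms(4,5,6,7,8,3) False] by simp
qed

end
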